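(* Let $p\geqslant 2$ be a prime number and let $P(x)\in\mathbb{Q}[x]$ be a polynomial of degree $d$, written as $P(x)=\sum_{i=0}^{d}\frac{b_i}{c_i}x^i$ with $b_i,c_i\in\mathbb{Z}$, $c_i\neq 0$, $\gcd(b_i,c_i)=1$. Let $\gamma\in\mathbb{Z}$, and for $i\in\{0,\dots,d\}$ write $P(\gamma+i)=\frac{r_i}{q_i}$ with $r_i,q_i\in\mathbb{Z}$, $q_i\neq 0$, $\gcd(r_i,q_i)=1$. Suppose $r_0\equiv r_1\equiv\dots\equiv r_d\equiv 0\pmod p$ and $d<p$. Then $b_0\equiv b_1\equiv\dots\equiv b_d\equiv 0\pmod p$. *)

theory Defs
  imports Complex_Main "HOL-Computational_Algebra.Polynomial" "HOL-Computational_Algebra.Primes"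
begin

end

theory Submission
  imports Defs
begin

definition inS :: "nat \<Rightarrow> rat \<Rightarrow> bool" where
  "inS p x \<longleftrightarrow> (\<exists>a b. x = of_int a / of_int b \<and> int p dvd a \<and> \<not> int p dvd b)"

lemma inS_0': "prime p \<Longrightarrow> inS p 0"
  unfolding inS_def
  by (rule exI[of _ 0], rule exI[of _ 1]) (auto simp: prime_gt_1_nat)

lemma pint: "prime p \<Longrightarrow> prime (int p)" by simp

lemma inS_add:
  assumes "prime p" "inS p x" "inS p y" shows "inS p (x + y)"
proof -
  obtain a b where x: "x = of_int a / of_int b" "int p dvd a" "\<not> int p dvd b" using assms(2) inS_def by auto
  obtain c e where y: "y = of_int c / of_int e" "int p dvd c" "\<not> int p dvd e" using assms(3) inS_def by auto
  have b0: "b \<noteq> 0" "e \<noteq> 0" using x y by auto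
  have "x + y = of_int (a*e + c*b) / of_int (b*e)" using b0 x y by (simp add: field_simps)
  moreover have "int p dvd a*e + c*b" using x y by simp
  moreover have "\<not> int p dvd b*e" using x y pint[OF assms(1)] by (simp add: prime_dvd_mult_iff)
  ultimately show ?thesis unfolding inS_def by blast
qed

lemma inS_uminus:
  assumes "inS p x" shows "inS p (- x)"
proof -
  obtain a b where x: "x = of_int a / of_int b" "int p dvd a" "\<not> int p dvd b" using assms inS_def by auto
  have "-x = of_int (-a) / of_int b" using x by simp
  thus ?thesis unfolding inS_def using x by (metis dvd_minus_iff)
qed

lemma inS_diff:
  assumes "prime p" "inS p x" "inS p y" shows "inS p (x - y)"
  using inS_add[OF assms(1,2) inS_uminus[OF assms(3)]] by simp

lemma inS_mult_int:
  assumes "inS p x" shows "inS p (x * of_int m)"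
proof -
  obtain a b where x: "x = of_int a / of_int b" "int p dvd a" "\<not> int p dvd b" using assms inS_def by auto
  have "x * of_int m = of_int (a*m) / of_int b" using x by simp
  thus ?thesis unfolding inS_def using x by (metis dvd_mult2)
qed

lemma inS_div_int:
  assumes "prime p" "inS p x" "\<not> int p dvd m" shows "inS p (x / of_int m)"
proof -
  obtain a b where x: "x = of_int a / of_int b" "int p dvd a" "\<not> int p dvd b" using assms inS_def by auto
  have "x / of_int m = of_int a / of_int (b*m)" using x by simp
  moreover have "\<not> int p dvd b*m" using x assms pint[OF assms(1)] by (simp add: prime_dvd_mult_iff)
  ultimately show ?thesis unfolding inS_def using x by blast
qed

lemma main:
  assumes "prime p"
  shows "\<forall>P \<gamma>. degree P \<le> n \<longrightarrow> n < p \<longrightarrow>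
     (\<forall>i\<le>n. inS p (poly P (of_int (\<gamma> + int i)))) \<longrightarrow> (\<forall>k. inS p (coeff P k))"
proof (induction n)
  case 0
  show ?case
  proof (intro allI impI)
    fix P :: "rat poly" and \<gamma> :: int and k
    assume d: "degree P \<le> 0" and h: "\<forall>i\<le>0. inS p (poly P (of_int (\<gamma> + int i)))"
    obtain c where P: "P = [:c:]" using d by (metis degree_eq_zeroE le_zero_eq)
    show "inS p (coeff P k)"
      using h P by (cases k) (auto simp: inS_0'[OF assms])
  qed
next
  case (Suc n)
  show ?case
  proof (intro allI impI)
    fix P :: "rat poly" and \<gamma> :: int and k
    assume d: "degree P \<le> Suc n" and np: "Suc n < p"
      and h: "\<forall>i\<le>Suc n. inS p (poly P (of_int (\<gamma> + int i)))"
    define c where "c = (of_int \<gamma> :: rat)"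
    define R where "R = synthetic_div P c"
    have cor: "P + smult c R = pCons (poly P c) R" unfolding R_def by (rule synthetic_div_correct)
    have dR: "degree R \<le> n" using d unfolding R_def degree_synthetic_div by simp
    have hv: "inS p (poly P c)" using h[rule_format, of 0] c_def by simp
    have "\<forall>i\<le>n. inS p (poly R (of_int ((\<gamma>+1) + int i)))"
    proof (intro allI impI)
      fix i assume i: "i \<le> n"
      define x where "x = (of_int ((\<gamma>+1) + int i) :: rat)"
      have "poly P x + c * poly R x = poly P c + x * poly R x"
        using arg_cong[OF cor, of "\<lambda>q. poly q x"] by simp
      hence "poly R x * (x - c) = poly P x - poly P c" by (simp add: algebra_simps)
      moreover have xc: "x - c = of_int (int (Suc i))" unfolding x_def c_def by simp
      ultimately have "poly R x = (poly P x - poly P c) / of_int (int (Suc i))"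
        by (simp add: field_simps)
      moreover have "inS p (poly P x - poly P c)"
        using inS_diff[OF assms _ hv] h[rule_format, of "Suc i"] i unfolding x_def
        by (simp add: add.assoc)
      moreover have "\<not> int p dvd int (Suc i)"
      proof
        assume "int p dvd int (Suc i)"
        hence "p dvd Suc i" by (simp only: of_nat_dvd_iff)
        hence "p \<le> Suc i" by (rule dvd_imp_le) simp
        thus False using i np by simp
      qed
      ultimately have "inS p (poly R x)"
        using inS_div_int[OF assms] by metis
      thus "inS p (poly R (of_int ((\<gamma>+1) + int i)))" unfolding x_def .
    qed
    hence cR: "\<forall>k. inS p (coeff R k)" using Suc.IH[rule_format, of R "\<gamma>+1"] dR np by simp
    have ck: "coeff P k + c * coeff R k = coeff (pCons (poly P c) R) k"
      using arg_cong[OF cor, of "\<lambda>q. coeff q k"] by simp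
    show "inS p (coeff P k)"
    proof (cases k)
      case 0
      hence "coeff P k = poly P c - coeff R 0 * of_int \<gamma>" using ck c_def by (simp add: algebra_simps)
      thus ?thesis using inS_diff[OF assms hv inS_mult_int[OF cR[rule_format, of 0]]] by simp
    next
      case (Suc m)
      hence "coeff P k = coeff R m - coeff R k * of_int \<gamma>" using ck c_def by (simp add: algebra_simps)
      thus ?thesis using inS_diff[OF assms cR[rule_format] inS_mult_int[OF cR[rule_format, of k]]] by simp
    qed
  qed
qed

theorem lemma3p3:
  fixes p :: nat and P :: "rat poly" and d :: nat and \<gamma> :: int
    and b c r q :: "nat \<Rightarrow> int"
  assumes "prime p"
    and "degree P = d"
    and "\<And>i. i \<le> d \<Longrightarrow> c i \<noteq> 0 \<and> coprime (b i) (c i) \<and>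
                 coeff P i = of_int (b i) / of_int (c i)"
    and "\<And>i. i \<le> d \<Longrightarrow> q i \<noteq> 0 \<and> coprime (r i) (q i) \<and>
                 poly P (of_int (\<gamma> + int i)) = of_int (r i) / of_int (q i)"
    and "\<And>i. i \<le> d \<Longrightarrow> int p dvd r i"
    and "d < p"
  shows "\<forall>i\<le>d. int p dvd b i"
proof (intro allI impI)
  fix i assume i: "i \<le> d"
  have pp: "prime (int p)" using assms(1) by simp
  have vals: "\<forall>j\<le>d. inS p (poly P (of_int (\<gamma> + int j)))"
  proof (intro allI impI)
    fix j assume j: "j \<le> d"
    have "\<not> int p dvd q j"
    proof
      assume "int p dvd q j"
      hence "int p dvd gcd (r j) (q j)" using assms(5)[OF j] by simp
      hence "int p dvd 1" using assms(4)[OF j] by simp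
      thus False using pp by (simp add: prime_int_iff)
    qed
    thus "inS p (poly P (of_int (\<gamma> + int j)))"
      unfolding inS_def using assms(4,5)[OF j] by blast
  qed
  have "inS p (coeff P i)" using main[OF assms(1), of d] assms(2,6) vals by auto
  then obtain a e where x: "coeff P i = of_int a / of_int e" "int p dvd a" "\<not> int p dvd e"
    unfolding inS_def by auto
  have e0: "e \<noteq> 0" using x by auto
  have ci: "c i \<noteq> 0" "coeff P i = of_int (b i) / of_int (c i)" using assms(3)[OF i] by auto
  have "of_int (b i) / of_int (c i) = (of_int a / of_int e :: rat)" using x ci by simp
  hence "of_int (b i * e) = (of_int (a * c i) :: rat)" using e0 ci by (simp add: field_simps)
  hence "b i * e = a * c i" using of_int_eq_iff by blast
  hence "int p dvd b i * e" using x by simp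
  thus "int p dvd b i" using x pp by (simp add: prime_dvd_mult_iff)
qed

end
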